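(* Let $C$ be a closed convex subset of a Banach space and let $T:C\to C$ be nonexpansive. Suppose that for some $\alpha\in(0,1)$ the mapping $F=(I-\alpha T)^{-1}(1-\alpha)I:C\to C$ satisfies $F(D)=D$ for some nonempty bounded set $D\subset C$. Then $T$ has a fixed point.
   Context: $T$ nonexpansive means $\|Tx-Ty\|\le\|x-y\|$ for all $x,y\in C$. For $x\in C$, $Fx$ is the unique point $y\in C$ satisfying $y-\alpha Ty=(1-\alpha)x$ (equivalently, $y=\alpha Ty+(1-\alpha)x$), which exists and is unique by the Banach contraction principle. *)

theory Defs
  imports "HOL-Analysis.Analysis"
begin

definition nonexpansive_on :: "'a::real_normed_vector set \<Rightarrow> ('a \<Rightarrow> 'a) \<Rightarrow> bool" where
  "nonexpansive_on C T \<longleftrightarrow> (\<forall>x\<in>C. \<forall>y\<in>C. norm (T x - T y) \<le> norm (x - y))"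

text \<open>The resolvent-type map F = (I - alpha T)^{-1} (1 - alpha) I on C:
  F x is the unique y in C with y = alpha T y + (1 - alpha) x.\<close>
definition resolvent_map :: "'a::real_normed_vector set \<Rightarrow> ('a \<Rightarrow> 'a) \<Rightarrow> real \<Rightarrow> 'a \<Rightarrow> 'a" where
  "resolvent_map C T \<alpha> x = (THE y. y \<in> C \<and> y = \<alpha> *\<^sub>R T y + (1 - \<alpha>) *\<^sub>R x)"

end

theory Submission imports Defs begin

lemma avg_mono:
  fixes S :: "'a::real_normed_vector \<Rightarrow> 'a"
  assumes t: "0 < t" "t < 1"
    and S: "\<forall>a\<in>A. \<forall>b\<in>A. norm (S a - S b) \<le> norm (a - b)"
    and a: "a \<in> A" and b: "b \<in> A" and bdef: "b = (1-t) *\<^sub>R a + t *\<^sub>R S a"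
  shows "norm (S b - b) \<le> norm (S a - a)"
proof -
  have "S b - b = (S b - S a) + (1-t) *\<^sub>R (S a - a)"
    by (simp add: bdef algebra_simps)
  hence "norm (S b - b) \<le> norm (S b - S a) + norm ((1-t) *\<^sub>R (S a - a))"
    by (metis norm_triangle_ineq)
  also have "norm ((1-t) *\<^sub>R (S a - a)) = (1-t) * norm (S a - a)" using t by simp
  also have "norm (S b - S a) \<le> norm (b - a)" using S a b by blast
  also have "b - a = t *\<^sub>R (S a - a)" by (simp add: bdef algebra_simps)
  also have "norm (t *\<^sub>R (S a - a)) = t * norm (S a - a)" using t by simp
  finally show ?thesis by (simp add: algebra_simps)
qed

lemma bern: fixes t :: real assumes "0 < t" "t < 1"
  shows "1 + real n * t \<le> (1/(1-t))^n"
proof (induction n)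
  case 0 then show ?case by simp
next
  case (Suc n)
  have "1 + real (Suc n) * t \<le> (1 + real n * t) / (1-t)"
    using assms by (simp add: field_simps)
  also have "\<dots> \<le> (1/(1-t))^n / (1-t)" using Suc assms by (simp add: divide_right_mono)
  finally show ?case by (simp add: field_simps)
qed

lemma GK:
  fixes S :: "'a::real_normed_vector \<Rightarrow> 'a" and x :: "nat \<Rightarrow> 'a"
  assumes t: "0 < t" "t < 1"
    and S: "\<forall>a\<in>A. \<forall>b\<in>A. norm (S a - S b) \<le> norm (a - b)"
    and xA: "\<And>k. x k \<in> A"
    and rec: "\<And>k. x (Suc k) = (1-t) *\<^sub>R x k + t *\<^sub>R S (x k)"
  shows "(1 + real n * t) * norm (S (x i) - x i)
     \<le> norm (S (x (i+n)) - x i) + (1/(1-t))^n * (norm (S (x i) - x i) - norm (S (x (i+n)) - x (i+n)))"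
proof -
  define d where "d k = norm (S (x k) - x k)" for k
  have dmono: "d (Suc k) \<le> d k" for k
    unfolding d_def by (rule avg_mono[OF t S xA xA rec])
  have dmono2: "d (i + j) \<le> d i" for i j
  proof (induction j)
    case 0 then show ?case by simp
  next
    case (Suc j)
    have "d (i + Suc j) \<le> d (i + j)" using dmono[of "i+j"] by simp
    thus ?case using Suc.IH by linarith
  qed
  have d0: "0 \<le> d k" for k unfolding d_def by simp
  have step: "norm (x (Suc k) - x k) = t * d k" for k
  proof -
    have "x (Suc k) - x k = t *\<^sub>R (S (x k) - x k)" by (simp add: rec algebra_simps)
    thus ?thesis using t by (simp add: d_def)
  qed
  have dist: "norm (x (i + m) - x i) \<le> real m * t * d i" for i m
  proof (induction m)
    case 0 then show ?case by simp
  next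
    case (Suc m)
    have "x (i + Suc m) - x i = (x (Suc (i+m)) - x (i+m)) + (x (i+m) - x i)" by simp
    hence "norm (x (i + Suc m) - x i) \<le> norm (x (Suc (i+m)) - x (i+m)) + norm (x (i+m) - x i)"
      by (metis norm_triangle_ineq)
    also have "\<dots> \<le> t * d i + real m * t * d i"
    proof -
      have "t * d (i + m) \<le> t * d i" using dmono2[of i m] t by (simp add: mult_left_mono)
      thus ?thesis using step[of "i+m"] Suc.IH by linarith
    qed
    finally show ?case by (simp add: algebra_simps)
  qed
  show ?thesis
  proof (induction n arbitrary: i)
    case 0 then show ?case by simp
  next
    case (Suc n)
    define P where "P = (1/(1-t))^n"
    define a where "a = norm (S (x (i + Suc n)) - x i)"
    define b where "b = norm (S (x (i + Suc n)) - x (Suc i))"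
    define c where "c = norm (x (i + Suc n) - x i)"
    have IH: "(1 + real n * t) * d (Suc i) \<le> b + P * (d (Suc i) - d (i + Suc n))"
      using Suc.IH[of "Suc i"] by (simp add: d_def b_def P_def)
    have "S (x (i + Suc n)) - x (Suc i) = (1-t) *\<^sub>R (S (x (i + Suc n)) - x i) + t *\<^sub>R (S (x (i + Suc n)) - S (x i))"
      by (simp add: rec algebra_simps)
    hence "b \<le> norm ((1-t) *\<^sub>R (S (x (i + Suc n)) - x i)) + norm (t *\<^sub>R (S (x (i + Suc n)) - S (x i)))"
      unfolding b_def by (metis norm_triangle_ineq)
    also have "\<dots> = (1-t) * a + t * norm (S (x (i + Suc n)) - S (x i))"
      using t by (simp add: a_def)
    also have "norm (S (x (i + Suc n)) - S (x i)) \<le> c" using S xA unfolding c_def by blast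
    finally have bc: "b \<le> (1-t) * a + t * c" using t by (simp add: mult_left_mono)
    have cb: "c \<le> real (Suc n) * t * d i" unfolding c_def by (rule dist)
    have Pb: "1 + real n * t \<le> P" unfolding P_def by (rule bern[OF t])
    have m1: "(1 + real n * t) * (d i - d (Suc i)) \<le> P * (d i - d (Suc i))"
      using Pb dmono[of i] by (simp add: mult_right_mono)
    have m2: "t * c \<le> t * (real (Suc n) * t * d i)" using cb t by (simp add: mult_left_mono)
    have key: "(1-t) * ((1 + real (Suc n) * t) * d i) \<le> (1-t) * a + P * (d i - d (i + Suc n))"
      using IH bc m1 m2 by (simp add: algebra_simps)
    have "(1 + real (Suc n) * t) * d i \<le> a + P * (d i - d (i + Suc n)) / (1-t)"
      using key t by (simp add: field_simps)
    thus ?case by (simp add: d_def a_def P_def field_simps)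
  qed
qed

lemma resolvent_prop:
  fixes C :: "'a::banach set" and T :: "'a \<Rightarrow> 'a"
  assumes "closed C" "convex C" "T ` C \<subseteq> C" "nonexpansive_on C T" "0 < \<alpha>" "\<alpha> < 1"
    and x: "x \<in> C"
  shows "resolvent_map C T \<alpha> x \<in> C \<and>
    resolvent_map C T \<alpha> x = \<alpha> *\<^sub>R T (resolvent_map C T \<alpha> x) + (1 - \<alpha>) *\<^sub>R x"
proof -
  define f where "f y = \<alpha> *\<^sub>R T y + (1 - \<alpha>) *\<^sub>R x" for y
  have "\<exists>!y\<in>C. f y = y"
  proof (rule Banach_fix)
    show "complete C" using assms(1) by (simp add: complete_eq_closed)
    show "C \<noteq> {}" using x by blast
    show "0 \<le> \<alpha>" "\<alpha> < 1" using assms(5,6) by auto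
    show "f ` C \<subseteq> C"
    proof
      fix z assume "z \<in> f ` C"
      then obtain y where y: "y \<in> C" "z = f y" by blast
      have "T y \<in> C" using y assms(3) by blast
      hence "\<alpha> *\<^sub>R T y + (1 - \<alpha>) *\<^sub>R x \<in> C"
        using x assms(2,5,6) convexD[of C "T y" x \<alpha> "1 - \<alpha>"] by simp
      thus "z \<in> C" using y(2) unfolding f_def by simp
    qed
    fix y1 y2 assume "y1 \<in> C" "y2 \<in> C"
    hence ne: "norm (T y1 - T y2) \<le> norm (y1 - y2)" using assms(4) unfolding nonexpansive_on_def by blast
    have "f y1 - f y2 = \<alpha> *\<^sub>R (T y1 - T y2)" by (simp add: f_def algebra_simps)
    hence "dist (f y1) (f y2) = \<alpha> * norm (T y1 - T y2)" using assms(5) by (simp add: dist_norm)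
    also have "\<dots> \<le> \<alpha> * dist y1 y2" using ne assms(5) by (simp add: dist_norm mult_left_mono)
    finally show "dist (f y1) (f y2) \<le> \<alpha> * dist y1 y2" .
  qed
  then obtain y where y: "y \<in> C" "f y = y" and u: "\<And>z. z \<in> C \<Longrightarrow> f z = z \<Longrightarrow> z = y" by blast
  have "resolvent_map C T \<alpha> x = y"
    unfolding resolvent_map_def
  proof (rule the_equality)
    show "y \<in> C \<and> y = \<alpha> *\<^sub>R T y + (1 - \<alpha>) *\<^sub>R x" using y unfolding f_def by auto
    fix z assume z: "z \<in> C \<and> z = \<alpha> *\<^sub>R T z + (1 - \<alpha>) *\<^sub>R x"
    hence "f z = z" unfolding f_def by metis
    thus "z = y" using u z by blast
  qed
  thus ?thesis using y unfolding f_def by auto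
qed

theorem corollary3p4:
  fixes C D :: "'a::banach set" and T :: "'a \<Rightarrow> 'a" and \<alpha> :: real
  assumes "closed C" and "convex C"
    and "T ` C \<subseteq> C"
    and "nonexpansive_on C T"
    and "0 < \<alpha>" and "\<alpha> < 1"
    and "D \<subseteq> C" and "D \<noteq> {}" and "bounded D"
    and "resolvent_map C T \<alpha> ` D = D"
  shows "\<exists>x\<in>C. T x = x"
proof -
  define F where "F = resolvent_map C T \<alpha>"
  have FCeq: "F x \<in> C \<and> F x = \<alpha> *\<^sub>R T (F x) + (1 - \<alpha>) *\<^sub>R x" if "x \<in> C" for x
    unfolding F_def by (rule resolvent_prop[OF assms(1-6) that])
  have FC: "F x \<in> C" if "x \<in> C" for x using FCeq[OF that] by (rule conjunct1)
  have Feq: "F x = \<alpha> *\<^sub>R T (F x) + (1 - \<alpha>) *\<^sub>R x" if "x \<in> C" for x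
    using FCeq[OF that] by (rule conjunct2)
  define S where "S x = T (F x)" for x
  have TN: "norm (T a - T b) \<le> norm (a - b)" if "a \<in> C" "b \<in> C" for a b
    using assms(4) that unfolding nonexpansive_on_def by blast
  have FN: "norm (F a - F b) \<le> norm (a - b)" if "a \<in> C" "b \<in> C" for a b
  proof -
    have "\<alpha> *\<^sub>R (T (F a) - T (F b)) + (1 - \<alpha>) *\<^sub>R (a - b)
       = (\<alpha> *\<^sub>R T (F a) + (1 - \<alpha>) *\<^sub>R a) - (\<alpha> *\<^sub>R T (F b) + (1 - \<alpha>) *\<^sub>R b)"
      by (simp add: algebra_simps)
    also have "\<dots> = F a - F b" using Feq[OF that(1)] Feq[OF that(2)] by metis
    finally have "F a - F b = \<alpha> *\<^sub>R (T (F a) - T (F b)) + (1 - \<alpha>) *\<^sub>R (a - b)" by simp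
    hence "norm (F a - F b) \<le> norm (\<alpha> *\<^sub>R (T (F a) - T (F b))) + norm ((1 - \<alpha>) *\<^sub>R (a - b))"
      by (metis norm_triangle_ineq)
    also have "\<dots> = \<alpha> * norm (T (F a) - T (F b)) + (1 - \<alpha>) * norm (a - b)"
      using assms(5,6) by simp
    also have "\<dots> \<le> \<alpha> * norm (F a - F b) + (1 - \<alpha>) * norm (a - b)"
      using TN[OF FC[OF that(1)] FC[OF that(2)]] assms(5) by (simp add: mult_left_mono)
    finally have "(1 - \<alpha>) * norm (F a - F b) \<le> (1 - \<alpha>) * norm (a - b)" by (simp add: algebra_simps)
    thus ?thesis using assms(6) by simp
  qed
  have SN: "\<forall>a\<in>C. \<forall>b\<in>C. norm (S a - S b) \<le> norm (a - b)"
    unfolding S_def using TN FN FC by (meson order_trans)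
  have FS: "F x = (1 - \<alpha>) *\<^sub>R x + \<alpha> *\<^sub>R S x" if "x \<in> C" for x
    using Feq[OF that] unfolding S_def by (metis add.commute)
  have surj: "\<exists>x\<in>D. F x = y" if "y \<in> D" for y
    using assms(10) that unfolding F_def by (metis imageE)
  have "\<forall>y\<in>D. \<exists>x. x \<in> D \<and> F x = y" using surj by blast
  then obtain g where g0: "\<forall>y\<in>D. g y \<in> D \<and> F (g y) = y"
    using bchoice[of D "\<lambda>y x. x \<in> D \<and> F x = y"] by blast
  have g: "g y \<in> D \<and> F (g y) = y" if "y \<in> D" for y using g0 that by blast
  obtain y0 where y0: "y0 \<in> D" using assms(8) by blast
  define y where "y k = (g ^^ k) y0" for k
  have yD: "y k \<in> D" for k by (induction k) (auto simp: y_def y0 g)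
  have yC: "y k \<in> C" for k using yD assms(7) by blast
  have yF: "F (y (Suc k)) = y k" for k using g[OF yD[of k]] by (simp add: y_def)
  have FD: "F z \<in> D" if "z \<in> D" for z using assms(10) that unfolding F_def by (metis imageI)
  obtain R where R: "\<And>z. z \<in> D \<Longrightarrow> norm z \<le> R" using assms(9) bounded_iff by metis
  define e where "e k = norm (S (y k) - y k)" for k
  define B where "B = 2 * R / \<alpha> + R"
  have Sb: "norm (S z) \<le> 2 * R / \<alpha>" if "z \<in> D" for z
  proof -
    have zC: "z \<in> C" using that assms(7) by blast
    have "\<alpha> *\<^sub>R S z = F z - (1 - \<alpha>) *\<^sub>R z" using FS[OF zC] by (simp add: algebra_simps)
    moreover have "norm (\<alpha> *\<^sub>R S z) = \<alpha> * norm (S z)" using assms(5) by simp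
    ultimately have "\<alpha> * norm (S z) = norm (F z - (1 - \<alpha>) *\<^sub>R z)" by simp
    also have "\<dots> \<le> norm (F z) + norm ((1 - \<alpha>) *\<^sub>R z)" by (rule norm_triangle_ineq4)
    also have "\<dots> = norm (F z) + (1 - \<alpha>) * norm z" using assms(6) by simp
    also have "\<dots> \<le> R + 1 * R"
    proof -
      have "(1 - \<alpha>) * norm z = norm z - \<alpha> * norm z" by (simp add: algebra_simps)
      moreover have "0 \<le> \<alpha> * norm z" using assms(5) by simp
      ultimately show ?thesis using R[OF FD[OF that]] R[OF that] by linarith
    qed
    finally show ?thesis using assms(5) by (simp add: field_simps)
  qed
  have Bb: "norm (S (y m) - y n) \<le> B" for m n
    using Sb[OF yD[of m]] R[OF yD[of n]] norm_triangle_ineq4[of "S (y m)" "y n"] unfolding B_def by linarith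
  have eB: "e k \<le> B" for k using Bb unfolding e_def .
  have emono: "e k \<le> e (Suc k)" for k
    unfolding e_def
    by (rule avg_mono[OF assms(5,6) SN yC yC]) (simp add: FS[OF yC, symmetric] yF)
  have emono2: "e k \<le> e (k + j)" for k j
  proof (induction j)
    case 0 then show ?case by simp
  next
    case (Suc j)
    have "e (k + j) \<le> e (Suc (k + j))" by (rule emono)
    thus ?case using Suc by simp
  qed
  have e0: "e 0 = 0"
  proof (rule ccontr)
    assume "e 0 \<noteq> 0"
    hence epos: "e 0 > 0" unfolding e_def by simp
    obtain n where n: "B < real n * (\<alpha> * e 0)"
      using reals_Archimedean3[of "\<alpha> * e 0"] epos assms(5) by auto
    define P :: real where "P = (1/(1-\<alpha>))^n"
    have Ppos: "P > 0" unfolding P_def using assms(6) by simp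
    define \<delta> where "\<delta> = (1 + real n * \<alpha>) * e 0 - B"
    have dpos: "\<delta> > 0" unfolding \<delta>_def using n epos by (simp add: algebra_simps)
    have inc: "\<delta> \<le> P * (e (m + n) - e m)" for m
    proof -
      define x where "x j = (F ^^ j) (y (m + n))" for j
      have xC: "x j \<in> C" for j by (induction j) (auto simp: x_def yC FC)
      have xrec: "x (Suc j) = (1 - \<alpha>) *\<^sub>R x j + \<alpha> *\<^sub>R S (x j)" for j
        using FS[OF xC[of j]] by (simp add: x_def)
      have xy: "j \<le> m + n \<Longrightarrow> x j = y (m + n - j)" for j
      proof (induction j)
        case 0 then show ?case by (simp add: x_def)
      next
        case (Suc j)
        have "m + n - j = Suc (m + n - Suc j)" using Suc.prems by simp
        hence "F (y (m + n - j)) = y (m + n - Suc j)" using yF[of "m + n - Suc j"] by metis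
        moreover have "x j = y (m + n - j)" using Suc by simp
        moreover have "x (Suc j) = F (x j)" by (simp add: x_def)
        ultimately show ?case by simp
      qed
      have x0: "x 0 = y (m + n)" and xn: "x n = y m" using xy by auto
      have GKi: "(1 + real n * \<alpha>) * e (m + n) \<le> norm (S (y m) - y (m + n)) + P * (e (m + n) - e m)"
        using GK[where t=\<alpha> and A=C and S=S and x=x and n=n and i=0, OF assms(5,6) SN xC xrec] by (simp add: x0 xn e_def P_def)
      have "(1 + real n * \<alpha>) * e 0 \<le> (1 + real n * \<alpha>) * e (m + n)"
        using emono2[of 0 "m+n"] assms(5) by (simp add: mult_left_mono)
      thus ?thesis using GKi Bb[of m "m+n"] unfolding \<delta>_def by linarith
    qed
    have grow: "e 0 + real k * (\<delta> / P) \<le> e (k * n)" for k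
    proof (induction k)
      case 0 then show ?case by simp
    next
      case (Suc k)
      have "\<delta> / P \<le> e (k * n + n) - e (k * n)" using inc[of "k*n"] Ppos by (simp add: field_simps)
      thus ?case using Suc by (simp add: algebra_simps)
    qed
    obtain k where k: "B < real k * (\<delta> / P)"
      using reals_Archimedean3[of "\<delta> / P"] dpos Ppos by auto
    have "e 0 \<ge> 0" unfolding e_def by simp
    thus False using grow[of k] eB[of "k*n"] k by linarith
  qed
  hence Sy: "S (y 0) = y 0" unfolding e_def by simp
  have "F (y 0) = y 0" using FS[OF yC[of 0]] Sy by (simp add: algebra_simps)
  hence "T (y 0) = y 0" using Sy by (simp add: S_def)
  thus ?thesis using yC by blast
qed

end
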